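(* Let $\mathcal X=[0,1]$, let $P_X$ be Lebesgue measure on $[0,1]$, and for $a\ge0$ let $k_{1,a}(x,y)=a+(x\wedge y)$. Then for all $a\ge0$ and $\gamma>0$, the quantity $H_\gamma$ associated with $k_{1,a}$ and $P_X$ satisfies $H_\gamma\le 2+1/\sqrt\gamma$.
   Context: For a kernel $k$ with a decomposition $k(x,y)=\sum_{r\in\mathcal R}\nu_re_r(x)e_r(y)$ where the $\nu_r>0$ are the (positive) eigenvalues of the integral operator $f\mapsto\int k(x,\cdot)f(x)\,dP_X(x)$ on $L_2(P_X)$ and $(e_r)$ are corresponding $L_2(P_X)$-orthonormal eigenfunctions, define for $\gamma>0$: $a_r=1/(1+\gamma/\nu_r)$ and $H_\gamma=\sup_{x\in\mathcal X}\sum_{r\in\mathcal R}a_re_r(x)^2$ (this does not depend on the choice of orthonormal eigenfunctions). *)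

theory Defs
  imports "HOL-Analysis.Analysis"
begin

definition k1 :: "real \<Rightarrow> real \<Rightarrow> real \<Rightarrow> real" where
  "k1 a x y = a + min x y"

text \<open>The eigen-equation is required pointwise on X, which
  fixes the (canonical) representative of each eigenfunction.\<close>
definition eigen_decomp ::
  "real set \<Rightarrow> real measure \<Rightarrow> (real \<Rightarrow> real \<Rightarrow> real) \<Rightarrow> ('r \<Rightarrow> real) \<Rightarrow> ('r \<Rightarrow> real \<Rightarrow> real) \<Rightarrow> 'r set \<Rightarrow> bool"
where
  "eigen_decomp X M k \<nu> e R \<longleftrightarrow>
     (\<forall>r\<in>R. \<nu> r > 0) \<and>
     (\<forall>r\<in>R. e r \<in> borel_measurable M \<and> integrable M (\<lambda>x. (e r x)\<^sup>2)) \<and>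
     (\<forall>r\<in>R. \<forall>s\<in>R. (\<integral>x. e r x * e s x \<partial>M) = (if r = s then 1 else 0)) \<and>
     (\<forall>r\<in>R. \<forall>y\<in>X. integrable M (\<lambda>x. k x y * e r x) \<and>
                     (\<integral>x. k x y * e r x \<partial>M) = \<nu> r * e r y) \<and>
     (\<forall>x\<in>X. \<forall>y\<in>X. ((\<lambda>r. \<nu> r * e r x * e r y) has_sum k x y) R)"

definition H_gamma :: "real set \<Rightarrow> real \<Rightarrow> ('r \<Rightarrow> real) \<Rightarrow> ('r \<Rightarrow> real \<Rightarrow> real) \<Rightarrow> 'r set \<Rightarrow> ennreal"
where
  "H_gamma X \<gamma> \<nu> e R =
     (SUP x\<in>X. (\<Sum>\<^sub>\<infinity>r\<in>R. ennreal (1 / (1 + \<gamma> / \<nu> r) * (e r x)\<^sup>2)))"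

end

theory Submission
  imports Defs
begin


lemma eig_cont:
  fixes e :: "real \<Rightarrow> real" and \<nu> a :: real
  assumes nu: "\<nu> > 0" and meas: "e \<in> borel_measurable (lebesgue_on {0..1})"
    and sq: "integrable (lebesgue_on {0..1}) (\<lambda>x. (e x)\<^sup>2)"
    and int: "\<forall>y\<in>{0..1}. integrable (lebesgue_on {0..1}) (\<lambda>x. k1 a x y * e x) \<and>
                 (\<integral>x. k1 a x y * e x \<partial>lebesgue_on {0..1}) = \<nu> * e y"
  shows "continuous_on {0..1} e"
proof -
  let ?M = "lebesgue_on {0..1::real}"
  interpret finite_measure ?M by (rule finite_measure_lebesgue_on) simp
  have ie: "integrable ?M e" by (rule square_integrable_imp_integrable[OF meas sq])
  define L where "L = (\<integral>x. \<bar>e x\<bar> \<partial>?M) / \<nu>"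
  have L0: "L \<ge> 0" unfolding L_def using nu by (simp add: integral_nonneg_AE)
  have "L-lipschitz_on {0..1} e"
  proof (rule lipschitz_onI[OF _ L0])
    fix y z :: real assume y: "y \<in> {0..1}" and z: "z \<in> {0..1}"
    have iy: "integrable ?M (\<lambda>x. k1 a x y * e x)" and iz: "integrable ?M (\<lambda>x. k1 a x z * e x)"
      using int y z by auto
    have "\<nu> * e y - \<nu> * e z = (\<integral>x. k1 a x y * e x - k1 a x z * e x \<partial>?M)"
      using int y z by (simp add: Bochner_Integration.integral_diff[OF iy iz])
    also have "\<dots> = (\<integral>x. (min x y - min x z) * e x \<partial>?M)"
      by (rule Bochner_Integration.integral_cong) (auto simp: k1_def algebra_simps)
    finally have eq: "\<nu> * e y - \<nu> * e z = (\<integral>x. (min x y - min x z) * e x \<partial>?M)" .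
    have idf: "integrable ?M (\<lambda>x. (min x y - min x z) * e x)"
    proof -
      have "integrable ?M (\<lambda>x. k1 a x y * e x - k1 a x z * e x)" using iy iz by simp
      moreover have "(\<lambda>x. k1 a x y * e x - k1 a x z * e x) = (\<lambda>x. (min x y - min x z) * e x)"
        by (auto simp: k1_def algebra_simps)
      ultimately show ?thesis by simp
    qed
    have "\<bar>\<nu> * e y - \<nu> * e z\<bar> \<le> (\<integral>x. \<bar>(min x y - min x z) * e x\<bar> \<partial>?M)"
      unfolding eq by (rule integral_abs_bound)
    also have "\<dots> \<le> (\<integral>x. \<bar>y - z\<bar> * \<bar>e x\<bar> \<partial>?M)"
    proof (rule integral_mono)
      show "integrable ?M (\<lambda>x. \<bar>(min x y - min x z) * e x\<bar>)" using idf by auto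
      show "integrable ?M (\<lambda>x. \<bar>y - z\<bar> * \<bar>e x\<bar>)" using ie by auto
      fix x
      have "\<bar>min x y - min x z\<bar> \<le> \<bar>y - z\<bar>" by (auto simp: min_def)
      then show "\<bar>(min x y - min x z) * e x\<bar> \<le> \<bar>y - z\<bar> * \<bar>e x\<bar>"
        by (simp add: abs_mult mult_right_mono)
    qed
    also have "\<dots> = \<bar>y - z\<bar> * (\<integral>x. \<bar>e x\<bar> \<partial>?M)" by simp
    finally have "\<nu> * \<bar>e y - e z\<bar> \<le> \<bar>y - z\<bar> * (\<integral>x. \<bar>e x\<bar> \<partial>?M)"
      using nu by (simp add: abs_mult right_diff_distrib[symmetric])
    then have "\<bar>e y - e z\<bar> \<le> \<bar>y - z\<bar> * (\<integral>x. \<bar>e x\<bar> \<partial>?M) / \<nu>"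
      using nu by (simp add: field_simps)
    then show "dist (e y) (e z) \<le> L * dist y z"
      by (simp add: L_def dist_real_def mult.commute)
  qed
  then show ?thesis by (rule lipschitz_on_continuous_on)
qed



lemma key_ineq:
  fixes g h :: "real \<Rightarrow> real" and a s x :: real
  assumes g: "continuous_on {0..1} g" and a: "a \<ge> 0" and s: "s > 0" and x: "x \<in> {0..1}"
    and h: "\<And>y. y \<in> {0..1} \<Longrightarrow> h y = integral {0..1} (\<lambda>t. (a + min t y) * g t)"
  shows "(h x)\<^sup>2 \<le> (1 + 1/s) * (integral {0..1} (\<lambda>t. (h t)\<^sup>2) + s\<^sup>2 * integral {0..1} (\<lambda>t. g t * h t))"
proof -
  define I where "I = {0..1::real}"
  define Q where "Q = (\<lambda>y. integral {0..y} g)"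
  define P where "P = (\<lambda>y. integral {0..y} (\<lambda>t. t * g t))"
  define G where "G = (\<lambda>y. Q 1 - Q y)"
  define hh where "hh = (\<lambda>y. a * Q 1 + P y + y * G y)"
  have tg: "continuous_on {0..1} (\<lambda>t. t * g t)" using g by (intro continuous_intros)
  have gsub: "continuous_on {u..v} g" if "u \<ge> 0" "v \<le> 1" for u v
    using g by (rule continuous_on_subset) (use that in auto)
  have tgsub: "continuous_on {u..v} (\<lambda>t. t * g t)" if "u \<ge> 0" "v \<le> 1" for u v
    using tg by (rule continuous_on_subset) (use that in auto)
  have hh_eq: "h y = hh y" if y: "y \<in> I" for y
  proof -
    let ?f = "\<lambda>t. (a + min t y) * g t"
    have fc: "continuous_on {0..1} ?f" using g by (intro continuous_intros)
    have "integral {0..y} ?f + integral {y..1} ?f = integral {0..1} ?f"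
      using y by (intro Henstock_Kurzweil_Integration.integral_combine integrable_continuous_interval fc) (auto simp: I_def)
    then have "integral {0..1} ?f = integral {0..y} ?f + integral {y..1} ?f" by simp
    also have "integral {0..y} ?f = integral {0..y} (\<lambda>t. a * g t + t * g t)"
      by (rule integral_cong) (auto simp: algebra_simps)
    also have "\<dots> = a * Q y + P y"
      using y gsub[of 0 y] tgsub[of 0 y]
      by (subst integral_add) (auto simp: I_def Q_def P_def intro!: integrable_continuous_interval continuous_intros)
    also have "integral {y..1} ?f = integral {y..1} (\<lambda>t. (a + y) * g t)"
      by (rule integral_cong) (auto simp: algebra_simps)
    also have "\<dots> = (a + y) * (Q 1 - Q y)"
    proof -
      have "integral {0..y} g + integral {y..1} g = integral {0..1} g"
        using y by (intro Henstock_Kurzweil_Integration.integral_combine integrable_continuous_interval g) (auto simp: I_def)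
      then show ?thesis by (simp add: Q_def)
    qed
    finally show ?thesis using h[of y] y by (simp add: I_def hh_def G_def algebra_simps)
  qed
  have dQ: "(Q has_real_derivative g y) (at y within I)" if "y \<in> I" for y
    unfolding Q_def I_def using integral_has_real_derivative[OF g] that by (simp add: I_def)
  have dP: "(P has_real_derivative y * g y) (at y within I)" if "y \<in> I" for y
    unfolding P_def I_def using integral_has_real_derivative[OF tg] that by (simp add: I_def)
  have dG: "(G has_real_derivative - g y) (at y within I)" if "y \<in> I" for y
    unfolding G_def using dQ[OF that] by (auto intro!: derivative_eq_intros)
  have dhh: "(hh has_real_derivative G y) (at y within I)" if "y \<in> I" for y
  proof -
    have "(hh has_real_derivative (0 + y * g y + (1 * G y + - g y * y))) (at y within I)"
      unfolding hh_def
      by (intro DERIV_add DERIV_mult DERIV_const DERIV_ident dP[OF that] dG[OF that])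
    then show ?thesis by simp
  qed
  have cG: "continuous_on I G"
    unfolding continuous_on_eq_continuous_within using dG DERIV_continuous by blast
  have chh: "continuous_on I hh"
    unfolding continuous_on_eq_continuous_within using dhh DERIV_continuous by blast
  have Q0: "Q 0 = 0" by (simp add: Q_def)
  have P0: "P 0 = 0" by (simp add: P_def)
  have GG_le: "integral I (\<lambda>t. (G t)\<^sup>2) \<le> integral I (\<lambda>t. g t * hh t)"
  proof -
    have "((\<lambda>t. - g t * hh t + G t * G t) has_integral (G 1 * hh 1 - G 0 * hh 0)) {0..1}"
    proof (rule fundamental_theorem_of_calculus)
      fix y :: real assume "y \<in> {0..1}"
      then have y: "y \<in> I" by (simp add: I_def)
      have "((\<lambda>t. G t * hh t) has_real_derivative (- g y * hh y + G y * G y)) (at y within {0..1})"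
        using DERIV_mult[OF dG[OF y] dhh[OF y]] by (simp add: I_def)
      then show "((\<lambda>t. G t * hh t) has_vector_derivative (- g y * hh y + G y * G y)) (at y within {0..1})"
        by (simp only: has_real_derivative_iff_has_vector_derivative)
    next
      show "(0::real) \<le> 1" by simp
    qed
    moreover have "G 1 * hh 1 - G 0 * hh 0 = - a * (Q 1)\<^sup>2"
      unfolding G_def hh_def by (simp add: Q0 P0 power2_eq_square)
    ultimately have A: "integral I (\<lambda>t. - g t * hh t + G t * G t) = - a * (Q 1)\<^sup>2"
      unfolding I_def by (simp add: integral_unique)
    moreover have "integral I (\<lambda>t. - g t * hh t + G t * G t) = integral I (\<lambda>t. (G t)\<^sup>2) - integral I (\<lambda>t. g t * hh t)"
    proof -
      have i1: "(\<lambda>t. (G t)\<^sup>2) integrable_on I" 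
        using cG unfolding I_def by (intro integrable_continuous_interval continuous_intros) 
      have i2: "(\<lambda>t. g t * hh t) integrable_on I"
        using chh g unfolding I_def by (intro integrable_continuous_interval continuous_intros) 
      have "integral I (\<lambda>t. (G t)\<^sup>2 - g t * hh t) = integral I (\<lambda>t. (G t)\<^sup>2) - integral I (\<lambda>t. g t * hh t)"
        by (rule integral_diff[OF i1 i2])
      moreover have "(\<lambda>t. (G t)\<^sup>2 - g t * hh t) = (\<lambda>t. - g t * hh t + G t * G t)"
        by (simp add: fun_eq_iff power2_eq_square)
      ultimately show ?thesis by simp
    qed
    moreover have "a * (Q 1)\<^sup>2 \<ge> 0" using a by simp
    ultimately show ?thesis by linarith
  qed
  define q where "q = (\<lambda>t. (1/s) * (hh t)\<^sup>2 + s * (G t)\<^sup>2)"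
  have cq: "continuous_on I q" unfolding q_def using cG chh by (intro continuous_intros)
  have q_ge: "\<bar>2 * hh t * G t\<bar> \<le> q t" for t
  proof -
    have "0 \<le> (\<bar>hh t\<bar> - s * \<bar>G t\<bar>)\<^sup>2" by simp
    then have "2 * s * \<bar>hh t\<bar> * \<bar>G t\<bar> \<le> (hh t)\<^sup>2 + s\<^sup>2 * (G t)\<^sup>2"
      by (simp add: power2_eq_square algebra_simps)
    then have "s * \<bar>2 * hh t * G t\<bar> \<le> s * q t"
      using s by (simp add: q_def abs_mult algebra_simps power2_eq_square)
    then show ?thesis using s by simp
  qed
  have q0: "0 \<le> q t" for t using q_ge[of t] by linarith
  have qI: "q integrable_on {u..v}" if "u \<in> I" "v \<in> I" for u v
    using that by (intro integrable_continuous_interval continuous_on_subset[OF cq]) (auto simp: I_def)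
  have q_sub: "integral {u..v} q \<le> integral I q" if "u \<in> I" "v \<in> I" for u v
  proof -
    have "q integrable_on {0..1}" using qI[of 0 1] by (simp add: I_def)
    then show ?thesis using that q0 by (intro integral_subset_le qI) (auto simp: I_def)
  qed
  have ftc2: "((\<lambda>t. 2 * hh t * G t) has_integral ((hh v)\<^sup>2 - (hh u)\<^sup>2)) {u..v}"
    if uv: "u \<le> v" "u \<in> I" "v \<in> I" for u v
  proof (rule fundamental_theorem_of_calculus[OF uv(1)])
    fix y :: real assume yy: "y \<in> {u..v}"
    then have y: "y \<in> I" using uv by (auto simp: I_def)
    have sub: "{u..v} \<subseteq> I" using uv by (auto simp: I_def)
    have "((\<lambda>t. (hh t)\<^sup>2) has_real_derivative (of_nat 2 * (G y * hh y ^ (2 - Suc 0)))) (at y within I)"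
      by (rule DERIV_power[OF dhh[OF y]])
    then have "((\<lambda>t. (hh t)\<^sup>2) has_real_derivative (2 * hh y * G y)) (at y within {u..v})"
      by (intro DERIV_subset[OF _ sub]) (simp add: algebra_simps)
    then show "((\<lambda>t. (hh t)\<^sup>2) has_vector_derivative (2 * hh y * G y)) (at y within {u..v})"
      by (simp only: has_real_derivative_iff_has_vector_derivative)
  qed
  have hhI: "(\<lambda>t. 2 * hh t * G t) integrable_on {u..v}" if "u \<in> I" "v \<in> I" for u v
    using that by (intro integrable_continuous_interval continuous_on_subset[OF continuous_on_mult[OF continuous_on_mult[OF continuous_on_const chh] cG]]) (auto simp: I_def)
  have bound: "(hh v)\<^sup>2 \<le> (hh u)\<^sup>2 + integral I q" if uv: "u \<in> I" "v \<in> I" for u v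
  proof (cases "u \<le> v")
    case True
    have "(hh v)\<^sup>2 - (hh u)\<^sup>2 = integral {u..v} (\<lambda>t. 2 * hh t * G t)"
      using ftc2[OF True uv] by (simp add: integral_unique)
    also have "\<dots> \<le> integral {u..v} q"
      using q_ge by (intro integral_le hhI qI uv) (auto simp: abs_le_iff)
    finally show ?thesis using q_sub[OF uv] by linarith
  next
    case False
    then have vu: "v \<le> u" by simp
    have "(hh u)\<^sup>2 - (hh v)\<^sup>2 = integral {v..u} (\<lambda>t. 2 * hh t * G t)"
      using ftc2[OF vu uv(2) uv(1)] by (simp add: integral_unique)
    also have "\<dots> \<ge> - integral {v..u} q"
    proof -
      have "integral {v..u} (\<lambda>t. - q t) \<le> integral {v..u} (\<lambda>t. 2 * hh t * G t)"
      proof (intro integral_le hhI integrable_neg qI uv)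
        fix t
        have "\<bar>2 * hh t * G t\<bar> \<le> q t" by (rule q_ge)
        then show "- q t \<le> 2 * hh t * G t" by linarith
      qed
      then show ?thesis by simp
    qed
    finally show ?thesis using q_sub[OF uv(2) uv(1)] by linarith
  qed
  obtain y0 where y0: "y0 \<in> I" and y0min: "\<And>y. y \<in> I \<Longrightarrow> (hh y0)\<^sup>2 \<le> (hh y)\<^sup>2"
  proof -
    have "continuous_on I (\<lambda>t. (hh t)\<^sup>2)" using chh by (intro continuous_intros)
    then have "\<exists>x\<in>I. \<forall>y\<in>I. (hh x)\<^sup>2 \<le> (hh y)\<^sup>2"
      by (intro continuous_attains_inf) (auto simp: I_def)
    then show ?thesis using that by blast
  qed
  have hh2I: "(\<lambda>t. (hh t)\<^sup>2) integrable_on I"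
    using chh unfolding I_def by (intro integrable_continuous_interval continuous_intros)
  have G2I: "(\<lambda>t. (G t)\<^sup>2) integrable_on I"
    using cG unfolding I_def by (intro integrable_continuous_interval continuous_intros)
  have "(hh y0)\<^sup>2 = integral I (\<lambda>t. (hh y0)\<^sup>2)" by (simp add: I_def)
  also have "\<dots> \<le> integral I (\<lambda>t. (hh t)\<^sup>2)"
    using y0min by (intro integral_le hh2I) (auto simp: I_def)
  finally have y0b: "(hh y0)\<^sup>2 \<le> integral I (\<lambda>t. (hh t)\<^sup>2)" .
  have qint: "integral I q = (1/s) * integral I (\<lambda>t. (hh t)\<^sup>2) + s * integral I (\<lambda>t. (G t)\<^sup>2)"
  proof -
    have a1: "(\<lambda>t. (1/s) * (hh t)\<^sup>2) integrable_on I" using chh unfolding I_def by (intro integrable_continuous_interval continuous_intros)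
    have a2: "(\<lambda>t. s * (G t)\<^sup>2) integrable_on I" using cG unfolding I_def by (intro integrable_continuous_interval continuous_intros)
    show ?thesis unfolding q_def integral_add[OF a1 a2] integral_mult_right by simp
  qed
  define X where "X = integral I (\<lambda>t. (hh t)\<^sup>2)"
  define Y where "Y = integral I (\<lambda>t. (G t)\<^sup>2)"
  define Z where "Z = integral I (\<lambda>t. g t * hh t)"
  have X0: "X \<ge> 0" unfolding X_def by (intro integral_nonneg hh2I) auto
  have Y0: "Y \<ge> 0" unfolding Y_def by (intro integral_nonneg G2I) auto
  have YZ: "Y \<le> Z" using GG_le by (simp add: Y_def Z_def)
  have xI: "x \<in> I" using x by (simp add: I_def)
  have main: "(hh x)\<^sup>2 \<le> X + ((1/s) * X + s * Y)"
    using bound[OF y0 xI] y0b qint by (simp add: X_def Y_def)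
  have "s * Y \<le> (1 + 1/s) * (s\<^sup>2 * Y)"
  proof -
    have "(1 + 1/s) * (s\<^sup>2 * Y) = s * Y + s\<^sup>2 * Y" using s by (simp add: field_simps power2_eq_square)
    then show ?thesis using Y0 by simp
  qed
  moreover have "s\<^sup>2 * Y \<le> s\<^sup>2 * Z" using YZ by (simp add: mult_left_mono)
  moreover have "(1/s) * X + X = (1 + 1/s) * X" by (simp add: algebra_simps)
  moreover have "0 \<le> 1 + 1/s" using s by simp
  ultimately have fin: "(hh x)\<^sup>2 \<le> (1 + 1/s) * (X + s\<^sup>2 * Z)"
    using main by (smt (verit, best) distrib_left mult_left_mono)
  have "integral {0..1} (\<lambda>t. (h t)\<^sup>2) = X"
    unfolding X_def I_def by (rule integral_cong) (simp add: hh_eq I_def)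
  moreover have "integral {0..1} (\<lambda>t. g t * h t) = Z"
    unfolding Z_def I_def by (rule integral_cong) (simp add: hh_eq I_def)
  ultimately show ?thesis using fin hh_eq[OF xI] by simp
qed



lemma ortho_sum:
  fixes e :: "'r \<Rightarrow> real \<Rightarrow> real"
  assumes F: "finite F" and c: "\<And>r. r \<in> F \<Longrightarrow> continuous_on {0..1} (e r)"
    and o: "\<And>r s. r \<in> F \<Longrightarrow> s \<in> F \<Longrightarrow> integral {0..1} (\<lambda>t. e r t * e s t) = (if r = s then 1 else 0)"
  shows "integral {0..1} (\<lambda>t. (\<Sum>r\<in>F. \<alpha> r * e r t) * (\<Sum>r\<in>F. \<beta> r * e r t)) = (\<Sum>r\<in>F. \<alpha> r * \<beta> r)"
proof -
  have "(\<lambda>t. (\<Sum>r\<in>F. \<alpha> r * e r t) * (\<Sum>r\<in>F. \<beta> r * e r t)) = (\<lambda>t. \<Sum>r\<in>F. \<Sum>s\<in>F. \<alpha> r * \<beta> s * (e r t * e s t))"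
    by (simp add: sum_product algebra_simps)
  then have "integral {0..1} (\<lambda>t. (\<Sum>r\<in>F. \<alpha> r * e r t) * (\<Sum>r\<in>F. \<beta> r * e r t))
      = integral {0..1} (\<lambda>t. \<Sum>r\<in>F. \<Sum>s\<in>F. \<alpha> r * \<beta> s * (e r t * e s t))" by simp
  also have "\<dots> = (\<Sum>r\<in>F. integral {0..1} (\<lambda>t. \<Sum>s\<in>F. \<alpha> r * \<beta> s * (e r t * e s t)))"
    using F c by (intro integral_sum) (auto intro!: integrable_continuous_interval continuous_intros)
  also have "\<dots> = (\<Sum>r\<in>F. \<Sum>s\<in>F. integral {0..1} (\<lambda>t. \<alpha> r * \<beta> s * (e r t * e s t)))"
    using F c by (intro sum.cong refl integral_sum) (auto intro!: integrable_continuous_interval continuous_intros)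
  also have "\<dots> = (\<Sum>r\<in>F. \<Sum>s\<in>F. \<alpha> r * \<beta> s * (if r = s then 1 else 0))"
    using o by (intro sum.cong refl) (simp add: integral_mult_right)
  also have "\<dots> = (\<Sum>r\<in>F. \<alpha> r * \<beta> r)"
  proof (rule sum.cong[OF refl])
    fix r assume r: "r \<in> F"
    have "(\<Sum>s\<in>F. \<alpha> r * \<beta> s * (if r = s then 1 else 0)) = (\<Sum>s\<in>F. if r = s then \<alpha> r * \<beta> s else 0)"
      by (rule sum.cong) auto
    also have "\<dots> = \<alpha> r * \<beta> r" using F r by (simp add: sum.delta)
    finally show "(\<Sum>s\<in>F. \<alpha> r * \<beta> s * (if r = s then 1 else 0)) = \<alpha> r * \<beta> r" .
  qed
  finally show ?thesis .
qed



theorem lemma4: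
  fixes a \<gamma> :: real and \<nu> :: "'r \<Rightarrow> real" and e :: "'r \<Rightarrow> real \<Rightarrow> real" and R :: "'r set"
  assumes "a \<ge> 0" and "\<gamma> > 0"
    and "eigen_decomp {0..1} (lebesgue_on {0..1}) (k1 a) \<nu> e R"
  shows "H_gamma {0..1} \<gamma> \<nu> e R \<le> ennreal (2 + 1 / sqrt \<gamma>)"
proof -
  let ?M = "lebesgue_on {0..1::real}"
  note ed = assms(3)[unfolded eigen_decomp_def]
  have nu: "\<And>r. r \<in> R \<Longrightarrow> \<nu> r > 0" using ed by blast
  have cont: "\<And>r. r \<in> R \<Longrightarrow> continuous_on {0..1} (e r)"
  proof -
    fix r assume r: "r \<in> R"
    show "continuous_on {0..1} (e r)"
      by (rule eig_cont[of "\<nu> r" _ a]) (use ed r in auto)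
  qed
  have BL: "(\<integral>x. f x \<partial>?M) = integral {0..1} f" if "continuous_on {0..1} f" for f :: "real \<Rightarrow> real"
    by (rule lebesgue_integral_eq_integral[OF continuous_imp_integrable_real[OF that]]) simp
  have orth: "integral {0..1} (\<lambda>t. e r t * e s t) = (if r = s then 1 else 0)" if "r \<in> R" "s \<in> R" for r s
  proof -
    have "integral {0..1} (\<lambda>t. e r t * e s t) = (\<integral>t. e r t * e s t \<partial>?M)"
      using cont that by (intro BL[symmetric] continuous_intros) auto
    then show ?thesis using ed that by auto
  qed
  have eig: "integral {0..1} (\<lambda>t. (a + min t y) * e r t) = \<nu> r * e r y" if "r \<in> R" "y \<in> {0..1}" for r y
  proof -
    have "integral {0..1} (\<lambda>t. (a + min t y) * e r t) = (\<integral>t. k1 a t y * e r t \<partial>?M)"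
      unfolding k1_def using cont that by (intro BL[symmetric] continuous_intros) auto
    then show ?thesis using ed that by auto
  qed
  define s where "s = sqrt \<gamma>"
  have s0: "s > 0" using assms(2) by (simp add: s_def)
  have s2: "s\<^sup>2 = \<gamma>" using assms(2) by (simp add: s_def)
  have fin: "(\<Sum>r\<in>F. 1 / (1 + \<gamma> / \<nu> r) * (e r x)\<^sup>2) \<le> 2 + 1 / s"
    if x: "x \<in> {0..1}" and F: "finite F" "F \<subseteq> R" for x F
  proof -
    define w where "w = (\<lambda>r. 1 / (1 + \<gamma> / \<nu> r))"
    define c where "c = (\<lambda>r. w r * e r x)"
    define h where "h = (\<lambda>y. \<Sum>r\<in>F. c r * e r y)"
    define g where "g = (\<lambda>y. \<Sum>r\<in>F. (c r / \<nu> r) * e r y)"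
    define S where "S = (\<Sum>r\<in>F. w r * (e r x)\<^sup>2)"
    have nuF: "\<And>r. r \<in> F \<Longrightarrow> \<nu> r > 0" using nu F by auto
    have contF: "\<And>r. r \<in> F \<Longrightarrow> continuous_on {0..1} (e r)" using cont F by auto
    have orthF: "\<And>r s. r \<in> F \<Longrightarrow> s \<in> F \<Longrightarrow> integral {0..1} (\<lambda>t. e r t * e s t) = (if r = s then 1 else 0)"
      using orth F by (meson subsetD)
    have w0: "w r > 0" if "r \<in> F" for r
      using nuF[OF that] assms(2) by (simp add: w_def add_pos_pos)
    have S0: "S \<ge> 0" unfolding S_def using w0 by (intro sum_nonneg) (simp add: less_imp_le)
    have gc: "continuous_on {0..1} g" unfolding g_def
      using contF by (intro continuous_on_sum continuous_intros) auto
    have hrep: "h y = integral {0..1} (\<lambda>t. (a + min t y) * g t)" if y: "y \<in> {0..1}" for y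
    proof -
      have "(\<lambda>t. (a + min t y) * g t) = (\<lambda>t. \<Sum>r\<in>F. (c r / \<nu> r) * ((a + min t y) * e r t))"
        unfolding g_def by (simp add: sum_distrib_left add_divide_distrib algebra_simps)
      then have "integral {0..1} (\<lambda>t. (a + min t y) * g t) = integral {0..1} (\<lambda>t. \<Sum>r\<in>F. (c r / \<nu> r) * ((a + min t y) * e r t))"
        by simp
      also have "\<dots> = (\<Sum>r\<in>F. integral {0..1} (\<lambda>t. (c r / \<nu> r) * ((a + min t y) * e r t)))"
        using F contF nuF by (intro integral_sum) (auto intro!: integrable_continuous_interval continuous_intros simp: less_imp_neq[symmetric])
      also have "\<dots> = (\<Sum>r\<in>F. (c r / \<nu> r) * (\<nu> r * e r y))"
        using F y by (intro sum.cong refl) (auto simp: integral_mult_right eig)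
      also have "\<dots> = h y" unfolding h_def using nuF by (intro sum.cong refl) (auto simp: less_imp_neq[symmetric])
      finally show ?thesis by simp
    qed
    have hh: "integral {0..1} (\<lambda>t. (h t)\<^sup>2) = (\<Sum>r\<in>F. c r * c r)"
      unfolding h_def power2_eq_square by (rule ortho_sum[OF F(1) contF orthF])
    have gh: "integral {0..1} (\<lambda>t. g t * h t) = (\<Sum>r\<in>F. c r / \<nu> r * c r)"
      unfolding h_def g_def by (rule ortho_sum[OF F(1) contF orthF])
    have "(\<Sum>r\<in>F. c r * c r) + s\<^sup>2 * (\<Sum>r\<in>F. c r / \<nu> r * c r) = (\<Sum>r\<in>F. c r * c r + \<gamma> * (c r / \<nu> r * c r))"
      by (simp add: s2 sum.distrib sum_distrib_left)
    also have "\<dots> = S" unfolding S_def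
    proof (rule sum.cong[OF refl])
      fix r assume r: "r \<in> F"
      have n: "\<nu> r > 0" using nuF[OF r] .
      have "\<nu> r + \<gamma> > 0" using n assms(2) by simp
      then have np: "\<nu> r + \<gamma> \<noteq> 0" by simp
      have wr: "w r = \<nu> r / (\<nu> r + \<gamma>)" unfolding w_def using n np by (simp add: field_simps)
      have "c r * c r + \<gamma> * (c r / \<nu> r * c r) = (c r)\<^sup>2 * ((\<nu> r + \<gamma>) / \<nu> r)"
        using n by (simp add: field_simps power2_eq_square)
      also have "\<dots> = w r * (e r x)\<^sup>2" unfolding c_def wr using n np
        by (simp add: power2_eq_square)
      finally show "c r * c r + \<gamma> * (c r / \<nu> r * c r) = w r * (e r x)\<^sup>2" .
    qed
    finally have qf: "integral {0..1} (\<lambda>t. (h t)\<^sup>2) + s\<^sup>2 * integral {0..1} (\<lambda>t. g t * h t) = S"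
      using hh gh by simp
    have hx: "h x = S" unfolding h_def S_def c_def by (simp add: power2_eq_square mult.assoc)
    have "S\<^sup>2 \<le> (1 + 1/s) * S"
      using key_ineq[OF gc assms(1) s0 x hrep] qf hx by simp
    then have "S \<le> 1 + 1/s"
    proof (cases "S = 0")
      case True then show ?thesis using s0 by simp
    next
      case False
      then have "S > 0" using S0 by simp
      moreover assume "S\<^sup>2 \<le> (1 + 1/s) * S"
      ultimately show ?thesis by (simp add: power2_eq_square)
    qed
    then show ?thesis unfolding S_def w_def by simp
  qed
  show ?thesis unfolding H_gamma_def
  proof (rule SUP_least)
    fix x :: real assume x: "x \<in> {0..1}"
    show "(\<Sum>\<^sub>\<infinity>r\<in>R. ennreal (1 / (1 + \<gamma> / \<nu> r) * (e r x)\<^sup>2)) \<le> ennreal (2 + 1 / sqrt \<gamma>)"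
    proof (rule infsum_le_finite_sums)
      show "(\<lambda>r. ennreal (1 / (1 + \<gamma> / \<nu> r) * (e r x)\<^sup>2)) summable_on R"
        by (rule nonneg_summable_on_complete) simp
      fix F assume F: "finite F" "F \<subseteq> R"
      have nn: "\<And>r. r \<in> F \<Longrightarrow> 0 \<le> 1 / (1 + \<gamma> / \<nu> r) * (e r x)\<^sup>2"
        using nu F assms(2) by (auto intro!: mult_nonneg_nonneg simp: add_pos_pos less_imp_le)
      have "(\<Sum>r\<in>F. ennreal (1 / (1 + \<gamma> / \<nu> r) * (e r x)\<^sup>2)) = ennreal (\<Sum>r\<in>F. 1 / (1 + \<gamma> / \<nu> r) * (e r x)\<^sup>2)"
        using nn by (rule sum_ennreal)
      also have "\<dots> \<le> ennreal (2 + 1 / sqrt \<gamma>)"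
        using fin[OF x F] by (intro ennreal_leI) (simp add: s_def)
      finally show "(\<Sum>r\<in>F. ennreal (1 / (1 + \<gamma> / \<nu> r) * (e r x)\<^sup>2)) \<le> ennreal (2 + 1 / sqrt \<gamma>)" .
    qed
  qed
qed


end
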